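(* Let $(X,Y)$ be a bivariate random vector whose distribution is given by a joint pmf or a joint pdf (w.r.t. Lebesgue measure) $f$. Call $(X,Y)$ UR$_{\mathrm E}$ (resp. LR$_{\mathrm E}$) if $f(x,y)\ge f(-y,-x)$ whenever $|x|<y$ (resp. whenever $|y|<x$), and UR$^{\mathrm E}$ (resp. LR$^{\mathrm E}$) if $f(x,y)\le f(-y,-x)$ whenever $|x|<y$ (resp. whenever $|y|<x$). Then: (i) UR$_{\mathrm E}$ implies $|X|\le_{\mathrm{st}}|\max(X,Y)|$ and $|\min(X,Y)|\le_{\mathrm{st}}|Y|$; (ii) LR$_{\mathrm E}$ implies $|Y|\le_{\mathrm{st}}|\max(X,Y)|$ and $|\min(X,Y)|\le_{\mathrm{st}}|X|$; (iii) UR$^{\mathrm E}$ implies $|X|\ge_{\mathrm{st}}|\max(X,Y)|$ and $|\min(X,Y)|\ge_{\mathrm{st}}|Y|$; (iv) LR$^{\mathrm E}$ implies $|Y|\ge_{\mathrm{st}}|\max(X,Y)|$ and $|\min(X,Y)|\ge_{\mathrm{st}}|X|$. Under the hypothesis of (i) the stochastic inequalities in (i) are strict if and only if $\Pr[|X|<Y]>\Pr[X<-|Y|]$; under the hypothesis of (iii), those in (iii) are strict iff $\Pr[|X|<Y]<\Pr[X<-|Y|]$. Under the hypothesis of (ii), those in (ii) are strict iff $\Pr[|Y|<X]>\Pr[Y<-|X|]$; under the hypothesis of (iv), those in (iv) are strict iff $\Pr[|Y|<X]<\Pr[Y<-|X|]$.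
   Context: For random variables $U,V$, $U\le_{\mathrm{st}}V$ (equivalently $V\ge_{\mathrm{st}}U$) means $F_U(x)\ge F_V(x)$ for all real $x$, $F$ denoting the cdf; the inequality is strict if in addition $F_U(x)>F_V(x)$ for at least one $x$. *)

theory Defs
  imports "HOL-Probability.Probability"
begin

definition joint_pdf :: "'a measure \<Rightarrow> ('a \<Rightarrow> real) \<Rightarrow> ('a \<Rightarrow> real) \<Rightarrow> (real \<times> real \<Rightarrow> real) \<Rightarrow> bool" where
  "joint_pdf M X Y f \<longleftrightarrow> (\<forall>z. 0 \<le> f z) \<and> f \<in> borel_measurable lborel \<and>
     distributed M lborel (\<lambda>\<omega>. (X \<omega>, Y \<omega>)) (\<lambda>z. ennreal (f z))"

definition joint_pmf :: "'a measure \<Rightarrow> ('a \<Rightarrow> real) \<Rightarrow> ('a \<Rightarrow> real) \<Rightarrow> (real \<times> real \<Rightarrow> real) \<Rightarrow> bool" where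
  "joint_pmf M X Y f \<longleftrightarrow> (\<exists>p. f = pmf p \<and>
     distr M borel (\<lambda>\<omega>. (X \<omega>, Y \<omega>)) = distr (measure_pmf p) borel (\<lambda>z. z))"

definition joint_pdf_or_pmf :: "'a measure \<Rightarrow> ('a \<Rightarrow> real) \<Rightarrow> ('a \<Rightarrow> real) \<Rightarrow> (real \<times> real \<Rightarrow> real) \<Rightarrow> bool" where
  "joint_pdf_or_pmf M X Y f \<longleftrightarrow> joint_pdf M X Y f \<or> joint_pmf M X Y f"

definition st_le :: "'a measure \<Rightarrow> ('a \<Rightarrow> real) \<Rightarrow> ('a \<Rightarrow> real) \<Rightarrow> bool" where
  "st_le M U V \<longleftrightarrow> (\<forall>x. cdf (distr M borel U) x \<ge> cdf (distr M borel V) x)"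

definition st_less :: "'a measure \<Rightarrow> ('a \<Rightarrow> real) \<Rightarrow> ('a \<Rightarrow> real) \<Rightarrow> bool" where
  "st_less M U V \<longleftrightarrow> st_le M U V \<and> (\<exists>x. cdf (distr M borel U) x > cdf (distr M borel V) x)"

definition UR_lower :: "(real \<times> real \<Rightarrow> real) \<Rightarrow> bool" where
  "UR_lower f \<longleftrightarrow> (\<forall>x y. \<bar>x\<bar> < y \<longrightarrow> f (x, y) \<ge> f (-y, -x))"

definition LR_lower :: "(real \<times> real \<Rightarrow> real) \<Rightarrow> bool" where
  "LR_lower f \<longleftrightarrow> (\<forall>x y. \<bar>y\<bar> < x \<longrightarrow> f (x, y) \<ge> f (-y, -x))"

definition UR_upper :: "(real \<times> real \<Rightarrow> real) \<Rightarrow> bool" where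
  "UR_upper f \<longleftrightarrow> (\<forall>x y. \<bar>x\<bar> < y \<longrightarrow> f (x, y) \<le> f (-y, -x))"

definition LR_upper :: "(real \<times> real \<Rightarrow> real) \<Rightarrow> bool" where
  "LR_upper f \<longleftrightarrow> (\<forall>x y. \<bar>y\<bar> < x \<longrightarrow> f (x, y) \<le> f (-y, -x))"

end

theory Submission imports Defs begin

lemma lborel_uminus_pair: "distr lborel borel (uminus :: real\<times>real \<Rightarrow> _) = lborel"
proof -
  have "(lborel :: (real\<times>real) measure) = density (distr lborel borel (\<lambda>x. 0 + (-1::real) *\<^sub>R x)) (\<lambda>_. \<bar>-1::real\<bar>^DIM(real\<times>real))"
    by (rule lborel_affine) simp
  then show ?thesis by (simp add: density_1)
qed

lemma lborel_swap_pair: "distr lborel borel (prod.swap :: real\<times>real \<Rightarrow> _) = lborel"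
proof -
  have "distr lborel borel (prod.swap :: real\<times>real \<Rightarrow> _) = distr (lborel \<Otimes>\<^sub>M lborel) (lborel \<Otimes>\<^sub>M lborel) (\<lambda>(x,y). (y,x))"
    apply (simp add: lborel_prod prod.swap_def case_prod_beta)
    by (rule distr_cong) (simp_all add: borel_prod split: prod.split)
  also have "\<dots> = lborel \<Otimes>\<^sub>M lborel"
    by (rule lborel_pair.distr_pair_swap[symmetric])
  finally show ?thesis by (simp add: lborel_prod)
qed

definition sig :: "real\<times>real \<Rightarrow> real\<times>real" where "sig z = (- snd z, - fst z)"

lemma sig_sig[simp]: "sig (sig z) = z" by (simp add: sig_def)

lemma sig_meas[measurable]: "sig \<in> borel_measurable borel"
  unfolding sig_def by (intro borel_measurable_continuous_onI continuous_intros)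

lemma lborel_sig: "distr lborel borel sig = lborel"
proof -
  have "sig = uminus \<circ> prod.swap" by (auto simp: sig_def fun_eq_iff)
  then have "distr lborel borel sig = distr (distr lborel borel prod.swap) borel uminus"
    by (subst distr_distr) (auto intro!: borel_measurable_continuous_onI continuous_intros)
  then show ?thesis by (simp add: lborel_swap_pair lborel_uminus_pair)
qed

lemma nn_integral_sig:
  assumes "g \<in> borel_measurable borel"
  shows "(\<integral>\<^sup>+z. g (sig z) \<partial>lborel) = (\<integral>\<^sup>+z. g z \<partial>lborel)"
proof -
  have "(\<integral>\<^sup>+z. g z \<partial>lborel) = (\<integral>\<^sup>+z. g z \<partial>distr lborel borel sig)" by (simp add: lborel_sig)
  also have "\<dots> = (\<integral>\<^sup>+z. g (sig z) \<partial>lborel)"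
    using assms by (subst nn_integral_distr) auto
  finally show ?thesis ..
qed

lemma bij_sig: "bij_betw sig UNIV UNIV"
  by (rule bij_betwI[of _ _ _ sig]) auto

lemma G_pdf:
  assumes "prob_space M" "joint_pdf M X Y f" "S \<in> sets borel" "\<forall>z\<in>S. f z \<le> f (sig z)"
  shows "measure M {\<omega>\<in>space M. (X \<omega>, Y \<omega>) \<in> S} \<le> measure M {\<omega>\<in>space M. sig (X \<omega>, Y \<omega>) \<in> S}"
proof -
  interpret prob_space M by fact
  have fnn: "\<And>z. 0 \<le> f z" and fm: "f \<in> borel_measurable lborel"
    and d: "distributed M lborel (\<lambda>\<omega>. (X \<omega>, Y \<omega>)) (\<lambda>z. ennreal (f z))"
    using assms(2) by (auto simp: joint_pdf_def)
  have S': "sig -` S \<in> sets borel" using measurable_sets[OF sig_meas assms(3)] by simp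
  have e1: "emeasure M {\<omega>\<in>space M. (X \<omega>, Y \<omega>) \<in> S} = (\<integral>\<^sup>+z. ennreal (f z) * indicator S z \<partial>lborel)"
  proof -
    have "{\<omega>\<in>space M. (X \<omega>, Y \<omega>) \<in> S} = (\<lambda>\<omega>. (X \<omega>, Y \<omega>)) -` S \<inter> space M" by auto
    then show ?thesis using distributed_emeasure[OF d, of S] assms(3) by simp
  qed
  have e2: "emeasure M {\<omega>\<in>space M. sig (X \<omega>, Y \<omega>) \<in> S} = (\<integral>\<^sup>+z. ennreal (f z) * indicator (sig -` S) z \<partial>lborel)"
  proof -
    have "{\<omega>\<in>space M. sig (X \<omega>, Y \<omega>) \<in> S} = (\<lambda>\<omega>. (X \<omega>, Y \<omega>)) -` (sig -` S) \<inter> space M" by auto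
    then show ?thesis using distributed_emeasure[OF d, of "sig -` S"] S' by simp
  qed
  have "(\<integral>\<^sup>+z. ennreal (f z) * indicator (sig -` S) z \<partial>lborel)
      = (\<integral>\<^sup>+z. ennreal (f (sig z)) * indicator (sig -` S) (sig z) \<partial>lborel)"
    using fm S' by (subst nn_integral_sig) auto
  also have "\<dots> = (\<integral>\<^sup>+z. ennreal (f (sig z)) * indicator S z \<partial>lborel)"
    by (simp add: indicator_def)
  also have "\<dots> \<ge> (\<integral>\<^sup>+z. ennreal (f z) * indicator S z \<partial>lborel)"
    using assms(4) by (intro nn_integral_mono) (auto simp: indicator_def intro!: ennreal_leI)
  finally have "emeasure M {\<omega>\<in>space M. (X \<omega>, Y \<omega>) \<in> S} \<le> emeasure M {\<omega>\<in>space M. sig (X \<omega>, Y \<omega>) \<in> S}"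
    using e1 e2 by simp
  then show ?thesis by (simp add: emeasure_eq_measure)
qed

lemma G_pmf:
  assumes "prob_space M" "X \<in> borel_measurable M" "Y \<in> borel_measurable M" "joint_pmf M X Y f" "S \<in> sets borel" "\<forall>z\<in>S. f z \<le> f (sig z)"
  shows "measure M {\<omega>\<in>space M. (X \<omega>, Y \<omega>) \<in> S} \<le> measure M {\<omega>\<in>space M. sig (X \<omega>, Y \<omega>) \<in> S}"
proof -
  interpret prob_space M by fact
  obtain p where fp: "f = pmf p" and dd: "distr M borel (\<lambda>\<omega>. (X \<omega>, Y \<omega>)) = distr (measure_pmf p) borel (\<lambda>z. z)"
    using assms(4) by (auto simp: joint_pmf_def)
  have XY: "(\<lambda>\<omega>. (X \<omega>, Y \<omega>)) \<in> borel_measurable M" 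
    using measurable_Pair[OF assms(2,3)] by (simp add: borel_prod)
  have S': "sig -` S \<in> sets borel" using measurable_sets[OF sig_meas assms(5)] by simp
  have conv: "measure M {\<omega>\<in>space M. (X \<omega>, Y \<omega>) \<in> A} = measure (measure_pmf p) A" if "A \<in> sets borel" for A
  proof -
    have "{\<omega>\<in>space M. (X \<omega>, Y \<omega>) \<in> A} = (\<lambda>\<omega>. (X \<omega>, Y \<omega>)) -` A \<inter> space M" by auto
    then have "measure M {\<omega>\<in>space M. (X \<omega>, Y \<omega>) \<in> A} = measure (distr M borel (\<lambda>\<omega>. (X \<omega>, Y \<omega>))) A"
      using measure_distr[OF XY that] by simp
    also have "\<dots> = measure (measure_pmf p) A" 
      using that measure_distr[of "\<lambda>z. z" "measure_pmf p" borel A] unfolding dd by simp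
    finally show ?thesis .
  qed
  have c2: "{\<omega>\<in>space M. sig (X \<omega>, Y \<omega>) \<in> S} = {\<omega>\<in>space M. (X \<omega>, Y \<omega>) \<in> sig -` S}" by auto
  have em: "emeasure (measure_pmf p) A = (\<integral>\<^sup>+x. ennreal (pmf p x) * indicator A x \<partial>count_space UNIV)" for A
  proof -
    have "emeasure (measure_pmf p) A = (\<integral>\<^sup>+x. indicator A x \<partial>measure_pmf p)" by simp
    also have "\<dots> = (\<integral>\<^sup>+x. ennreal (pmf p x) * indicator A x \<partial>count_space UNIV)"
      by (rule nn_integral_measure_pmf)
    finally show ?thesis .
  qed
  have "emeasure (measure_pmf p) (sig -` S) = (\<integral>\<^sup>+x. ennreal (pmf p (sig (sig x))) * indicator S (sig x) \<partial>count_space UNIV)"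
    unfolding em by (rule nn_integral_cong) (simp add: indicator_def)
  also have "\<dots> = (\<integral>\<^sup>+x. ennreal (pmf p (sig x)) * indicator S x \<partial>count_space UNIV)"
    by (rule nn_integral_bij_count_space[OF bij_sig, where f="\<lambda>x. ennreal (pmf p (sig x)) * indicator S x"])
  also have "\<dots> \<ge> (\<integral>\<^sup>+x. ennreal (pmf p x) * indicator S x \<partial>count_space UNIV)"
    using assms(6) unfolding fp by (intro nn_integral_mono) (auto simp: indicator_def intro!: ennreal_leI)
  finally have "emeasure (measure_pmf p) S \<le> emeasure (measure_pmf p) (sig -` S)" using em[of S] by simp
  then have m: "measure (measure_pmf p) S \<le> measure (measure_pmf p) (sig -` S)"
    by (simp add: measure_pmf.emeasure_eq_measure)
  show ?thesis unfolding c2 conv[OF assms(5)] conv[OF S'] by (rule m)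
qed

definition DD :: "(real\<times>real) set" where "DD = {z. \<bar>fst z\<bar> < snd z}"
definition AA :: "real \<Rightarrow> (real\<times>real) set" where "AA t = {z. \<bar>fst z\<bar> \<le> t \<and> t < snd z}"

lemma closed_le_borel: "continuous_on UNIV g \<Longrightarrow> continuous_on UNIV h \<Longrightarrow> {z::real\<times>real. (g z::real) \<le> h z} \<in> sets borel"
  by (intro borel_closed closed_Collect_le)
lemma open_less_borel: "continuous_on UNIV g \<Longrightarrow> continuous_on UNIV h \<Longrightarrow> {z::real\<times>real. (g z::real) < h z} \<in> sets borel"
  by (intro borel_open open_Collect_less)

lemma AA_borel: "AA t \<in> sets borel"
proof -
  have "AA t = {z. \<bar>fst z\<bar> \<le> t} \<inter> {z. t < snd z}" by (auto simp: AA_def)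
  then show ?thesis
    by (simp only:) (intro sets.Int closed_le_borel open_less_borel continuous_intros)
qed

lemma DD_borel: "DD \<in> sets borel"
  unfolding DD_def by (intro open_less_borel continuous_intros)

lemma AA_DD: "AA t \<subseteq> DD" by (auto simp: AA_def DD_def)

lemma sig_vimage_borel: "S \<in> sets borel \<Longrightarrow> sig -` S \<in> sets borel"
  using measurable_sets[OF sig_meas] by simp

lemma core:
  fixes \<mu> :: "(real\<times>real) measure"
  assumes fm: "finite_measure \<mu>" and sm: "sets \<mu> = sets borel"
    and key: "\<And>S. S \<in> sets borel \<Longrightarrow> S \<subseteq> DD \<Longrightarrow> measure \<mu> (sig -` S) \<le> measure \<mu> S"
  shows "(\<exists>t. 0 < measure \<mu> (AA t) - measure \<mu> (sig -` AA t)) \<longleftrightarrow> measure \<mu> (sig -` DD) < measure \<mu> DD"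
proof -
  interpret finite_measure \<mu> by fact
  define d where "d S = measure \<mu> S - measure \<mu> (sig -` S)" for S
  have d0: "0 \<le> d S" if "S \<in> sets borel" "S \<subseteq> DD" for S
    using key[OF that] by (simp add: d_def)
  have dadd: "d S = d T + d (S - T)" if "S \<in> sets borel" "T \<in> sets borel" "T \<subseteq> S" for S T
  proof -
    have "measure \<mu> S = measure \<mu> T + measure \<mu> (S - T)"
      using finite_measure_Union[of T "S - T"] that sm by (simp add: Un_absorb1)
    moreover have "measure \<mu> (sig -` S) = measure \<mu> (sig -` T) + measure \<mu> (sig -` (S - T))"
      using finite_measure_Union[of "sig -` T" "sig -` (S - T)"] that sm sig_vimage_borel
      by (simp add: vimage_Diff Un_absorb1 vimage_mono)
    ultimately show ?thesis by (simp add: d_def)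
  qed
  have dmono: "d T \<le> d S" if "S \<in> sets borel" "T \<in> sets borel" "T \<subseteq> S" "S \<subseteq> DD" for S T
    using dadd[OF that(1-3)] d0[of "S - T"] that by auto
  have dsub: "d (S \<union> T) \<le> d S + d T" if "S \<in> sets borel" "T \<in> sets borel" "S \<subseteq> DD" "T \<subseteq> DD" for S T
  proof -
    have "d (S \<union> T) = d S + d ((S \<union> T) - S)" using dadd[of "S \<union> T" S] that by auto
    also have "(S \<union> T) - S = T - S" by auto
    also have "d (T - S) \<le> d T" using dmono[of T "T - S"] that by auto
    finally show ?thesis by simp
  qed
  show ?thesis
  proof
    assume "\<exists>t. 0 < measure \<mu> (AA t) - measure \<mu> (sig -` AA t)"
    then obtain t where "0 < d (AA t)" by (auto simp: d_def)
    moreover have "d (AA t) \<le> d DD" using dmono[OF DD_borel AA_borel AA_DD] by simp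
    ultimately show "measure \<mu> (sig -` DD) < measure \<mu> DD" by (simp add: d_def)
  next
    assume pos: "measure \<mu> (sig -` DD) < measure \<mu> DD"
    show "\<exists>t. 0 < measure \<mu> (AA t) - measure \<mu> (sig -` AA t)"
    proof (rule ccontr)
      assume "\<not> ?thesis"
      then have dA: "d (AA t) \<le> 0" for t by (auto simp: d_def not_less)
      define r where "r = from_nat_into (\<rat> :: real set)"
      have rr: "range r = \<rat>" unfolding r_def
        by (intro range_from_nat_into) (auto simp: countable_rat)
      define Dn where "Dn n = (\<Union>k<n. AA (r k))" for n
      have Dnb: "Dn n \<in> sets borel" for n unfolding Dn_def
        by (intro sets.countable_UN') (auto simp: AA_borel)
      have DnD: "Dn n \<subseteq> DD" for n using AA_DD by (auto simp: Dn_def)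
      have dDn: "d (Dn n) \<le> 0" for n
      proof (induction n)
        case 0 then show ?case by (simp add: Dn_def d_def)
      next
        case (Suc n)
        have "Dn (Suc n) = Dn n \<union> AA (r n)" by (auto simp: Dn_def lessThan_Suc)
        then have "d (Dn (Suc n)) \<le> d (Dn n) + d (AA (r n))"
          using dsub[OF Dnb AA_borel DnD AA_DD] by simp
        then show ?case using Suc dA[of "r n"] by simp
      qed
      have UD: "(\<Union>n. Dn n) = DD"
      proof
        show "(\<Union>n. Dn n) \<subseteq> DD" using DnD by auto
        show "DD \<subseteq> (\<Union>n. Dn n)"
        proof
          fix z assume "z \<in> DD"
          then have "\<bar>fst z\<bar> < snd z" by (simp add: DD_def)
          then obtain q where q: "q \<in> \<rat>" "\<bar>fst z\<bar> < q" "q < snd z" using Rats_dense_in_real by blast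
          then obtain k where "q = r k" using rr by (metis rangeE)
          then have "z \<in> Dn (Suc k)" using q unfolding Dn_def AA_def by (intro UN_I[of k]) auto
          then show "z \<in> (\<Union>n. Dn n)" by blast
        qed
      qed
      have inc: "incseq Dn" unfolding incseq_def Dn_def by (intro allI impI UN_mono) auto
      have l1: "(\<lambda>n. measure \<mu> (Dn n)) \<longlonglongrightarrow> measure \<mu> DD"
        using finite_Lim_measure_incseq[of Dn] inc Dnb sm UD by auto
      have l2: "(\<lambda>n. measure \<mu> (sig -` Dn n)) \<longlonglongrightarrow> measure \<mu> (sig -` DD)"
      proof -
        have "incseq (\<lambda>n. sig -` Dn n)" using inc by (auto simp: incseq_def)
        moreover have "range (\<lambda>n. sig -` Dn n) \<subseteq> sets \<mu>" using Dnb sm sig_vimage_borel by auto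
        moreover have "(\<Union>n. sig -` Dn n) = sig -` DD" unfolding UD[symmetric] by (simp add: vimage_Union)
        ultimately show ?thesis using finite_Lim_measure_incseq[of "\<lambda>n. sig -` Dn n"] by auto
      qed
      have "(\<lambda>n. d (Dn n)) \<longlonglongrightarrow> d DD" unfolding d_def by (intro tendsto_diff l1 l2)
      then have "d DD \<le> 0" using dDn by (intro tendsto_upperbound) (auto intro: always_eventually)
      then show False using pos by (simp add: d_def)
    qed
  qed
qed

lemma G:
  assumes "prob_space M" "X \<in> borel_measurable M" "Y \<in> borel_measurable M" "joint_pdf_or_pmf M X Y f"
    "S \<in> sets borel" "\<forall>z\<in>S. f z \<le> f (sig z)"
  shows "measure M {\<omega>\<in>space M. (X \<omega>, Y \<omega>) \<in> S} \<le> measure M {\<omega>\<in>space M. sig (X \<omega>, Y \<omega>) \<in> S}"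
  using assms G_pdf[of M X Y f S] G_pmf[of M X Y f S] unfolding joint_pdf_or_pmf_def by blast

lemma decomp:
  fixes \<mu> :: "(real\<times>real) measure"
  assumes fm: "finite_measure \<mu>" and sm: "sets \<mu> = sets borel"
  shows "measure \<mu> {z. \<bar>fst z\<bar> \<le> t} - measure \<mu> {z. \<bar>max (fst z) (snd z)\<bar> \<le> t} = measure \<mu> (AA t) - measure \<mu> (sig -` AA t)"
    and "measure \<mu> {z. \<bar>min (fst z) (snd z)\<bar> \<le> t} - measure \<mu> {z. \<bar>snd z\<bar> \<le> t} = measure \<mu> (AA t) - measure \<mu> (sig -` AA t)"
proof -
  interpret finite_measure \<mu> by fact
  define C where "C = {z::real\<times>real. \<bar>fst z\<bar> \<le> t} \<inter> {z. snd z \<le> t}"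
  define E where "E = {z::real\<times>real. \<bar>snd z\<bar> \<le> t} \<inter> {z. - t \<le> fst z}"
  have Cb: "C \<in> sets \<mu>" unfolding C_def sm by (intro sets.Int closed_le_borel continuous_intros)
  have Eb: "E \<in> sets \<mu>" unfolding E_def sm by (intro sets.Int closed_le_borel continuous_intros)
  have Ab: "AA t \<in> sets \<mu>" using AA_borel sm by simp
  have sAb: "sig -` AA t \<in> sets \<mu>" using AA_borel sig_vimage_borel sm by simp
  have sA: "sig -` AA t = {z. \<bar>snd z\<bar> \<le> t \<and> fst z < - t}" by (auto simp: AA_def sig_def)
  have e1: "{z. \<bar>fst z\<bar> \<le> t} = C \<union> AA t" "C \<inter> AA t = {}" by (auto simp: C_def AA_def)
  have e2: "{z. \<bar>max (fst z) (snd z)\<bar> \<le> t} = C \<union> sig -` AA t" "C \<inter> sig -` AA t = {}"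
    unfolding sA by (auto simp: C_def)
  have e3: "{z. \<bar>min (fst z) (snd z)\<bar> \<le> t} = E \<union> AA t" "E \<inter> AA t = {}" by (auto simp: E_def AA_def)
  have e4: "{z. \<bar>snd z\<bar> \<le> t} = E \<union> sig -` AA t" "E \<inter> sig -` AA t = {}"
    unfolding sA by (auto simp: E_def)
  show "measure \<mu> {z. \<bar>fst z\<bar> \<le> t} - measure \<mu> {z. \<bar>max (fst z) (snd z)\<bar> \<le> t} = measure \<mu> (AA t) - measure \<mu> (sig -` AA t)"
    unfolding e1(1) e2(1) using finite_measure_Union[OF Cb Ab e1(2)] finite_measure_Union[OF Cb sAb e2(2)] by simp
  show "measure \<mu> {z. \<bar>min (fst z) (snd z)\<bar> \<le> t} - measure \<mu> {z. \<bar>snd z\<bar> \<le> t} = measure \<mu> (AA t) - measure \<mu> (sig -` AA t)"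
    unfolding e3(1) e4(1) using finite_measure_Union[OF Eb Ab e3(2)] finite_measure_Union[OF Eb sAb e4(2)] by simp
qed

lemma cdf_conv:
  assumes "prob_space M" "h \<in> borel_measurable M"
  shows "cdf (distr M borel h) t = measure M {\<omega>\<in>space M. h \<omega> \<le> t}"
proof -
  have "cdf (distr M borel h) t = measure M (h -` {..t} \<inter> space M)"
    unfolding cdf_def using assms(2) by (simp add: measure_distr)
  also have "h -` {..t} \<inter> space M = {\<omega>\<in>space M. h \<omega> \<le> t}" by auto
  finally show ?thesis .
qed

lemma main_pair:
  assumes P: "prob_space M" and U: "U \<in> borel_measurable M" and V: "V \<in> borel_measurable M"
    and keyM: "\<And>S. S \<in> sets borel \<Longrightarrow> S \<subseteq> DD \<Longrightarrow>
      measure M {\<omega>\<in>space M. sig (U \<omega>, V \<omega>) \<in> S} \<le> measure M {\<omega>\<in>space M. (U \<omega>, V \<omega>) \<in> S}"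
  shows "st_le M (\<lambda>\<omega>. \<bar>U \<omega>\<bar>) (\<lambda>\<omega>. \<bar>max (U \<omega>) (V \<omega>)\<bar>) \<and>
       st_le M (\<lambda>\<omega>. \<bar>min (U \<omega>) (V \<omega>)\<bar>) (\<lambda>\<omega>. \<bar>V \<omega>\<bar>) \<and>
       ((st_less M (\<lambda>\<omega>. \<bar>U \<omega>\<bar>) (\<lambda>\<omega>. \<bar>max (U \<omega>) (V \<omega>)\<bar>) \<and>
         st_less M (\<lambda>\<omega>. \<bar>min (U \<omega>) (V \<omega>)\<bar>) (\<lambda>\<omega>. \<bar>V \<omega>\<bar>)) \<longleftrightarrow>
        measure M {\<omega>\<in>space M. \<bar>U \<omega>\<bar> < V \<omega>} > measure M {\<omega>\<in>space M. U \<omega> < - \<bar>V \<omega>\<bar>})"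
proof -
  interpret prob_space M by fact
  have UV: "(\<lambda>\<omega>. (U \<omega>, V \<omega>)) \<in> borel_measurable M"
    using measurable_Pair[OF U V] by (simp add: borel_prod)
  define \<mu> where "\<mu> = distr M borel (\<lambda>\<omega>. (U \<omega>, V \<omega>))"
  have fm: "finite_measure \<mu>" unfolding \<mu>_def by (intro finite_measure_distr UV)
  have sm: "sets \<mu> = sets borel" unfolding \<mu>_def by simp
  have conv: "measure M {\<omega>\<in>space M. (U \<omega>, V \<omega>) \<in> S} = measure \<mu> S" if "S \<in> sets borel" for S
  proof -
    have "{\<omega>\<in>space M. (U \<omega>, V \<omega>) \<in> S} = (\<lambda>\<omega>. (U \<omega>, V \<omega>)) -` S \<inter> space M" by auto
    then show ?thesis unfolding \<mu>_def using measure_distr[OF UV that] by simp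
  qed
  have key: "measure \<mu> (sig -` S) \<le> measure \<mu> S" if "S \<in> sets borel" "S \<subseteq> DD" for S
  proof -
    have "{\<omega>\<in>space M. sig (U \<omega>, V \<omega>) \<in> S} = {\<omega>\<in>space M. (U \<omega>, V \<omega>) \<in> sig -` S}" by auto
    then show ?thesis using keyM[OF that] conv[OF that(1)] conv[OF sig_vimage_borel[OF that(1)]] by simp
  qed
  have cd: "cdf (distr M borel (\<lambda>\<omega>. g (U \<omega>, V \<omega>))) t = measure \<mu> {z. g z \<le> t}"
    if "continuous_on UNIV g" for g :: "real\<times>real \<Rightarrow> real" and t
  proof -
    have gm: "g \<in> borel_measurable borel" by (rule borel_measurable_continuous_onI[OF that])
    have "(\<lambda>\<omega>. g (U \<omega>, V \<omega>)) \<in> borel_measurable M" using measurable_compose[OF UV gm] by (simp add: o_def)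
    then have "cdf (distr M borel (\<lambda>\<omega>. g (U \<omega>, V \<omega>))) t = measure M {\<omega>\<in>space M. (U \<omega>, V \<omega>) \<in> {z. g z \<le> t}}"
      using cdf_conv[OF P] by simp
    also have "\<dots> = measure \<mu> {z. g z \<le> t}"
      by (rule conv) (intro closed_le_borel that continuous_intros)
    finally show ?thesis .
  qed
  have c1: "cdf (distr M borel (\<lambda>\<omega>. \<bar>U \<omega>\<bar>)) t = measure \<mu> {z. \<bar>fst z\<bar> \<le> t}" for t
    using cd[of "\<lambda>z. \<bar>fst z\<bar>" t] by (simp add: continuous_intros)
  have c2: "cdf (distr M borel (\<lambda>\<omega>. \<bar>max (U \<omega>) (V \<omega>)\<bar>)) t = measure \<mu> {z. \<bar>max (fst z) (snd z)\<bar> \<le> t}" for t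
    using cd[of "\<lambda>z. \<bar>max (fst z) (snd z)\<bar>" t] by (simp add: continuous_intros)
  have c3: "cdf (distr M borel (\<lambda>\<omega>. \<bar>min (U \<omega>) (V \<omega>)\<bar>)) t = measure \<mu> {z. \<bar>min (fst z) (snd z)\<bar> \<le> t}" for t
    using cd[of "\<lambda>z. \<bar>min (fst z) (snd z)\<bar>" t] by (simp add: continuous_intros)
  have c4: "cdf (distr M borel (\<lambda>\<omega>. \<bar>V \<omega>\<bar>)) t = measure \<mu> {z. \<bar>snd z\<bar> \<le> t}" for t
    using cd[of "\<lambda>z. \<bar>snd z\<bar>" t] by (simp add: continuous_intros)
  have dd1: "measure \<mu> {z. \<bar>fst z\<bar> \<le> t} - measure \<mu> {z. \<bar>max (fst z) (snd z)\<bar> \<le> t} = measure \<mu> (AA t) - measure \<mu> (sig -` AA t)" for t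
    by (rule decomp(1)[OF fm sm])
  have dd2: "measure \<mu> {z. \<bar>min (fst z) (snd z)\<bar> \<le> t} - measure \<mu> {z. \<bar>snd z\<bar> \<le> t} = measure \<mu> (AA t) - measure \<mu> (sig -` AA t)" for t
    by (rule decomp(2)[OF fm sm])
  have kA: "measure \<mu> (sig -` AA t) \<le> measure \<mu> (AA t)" for t by (rule key[OF AA_borel AA_DD])
  have strict: "(\<exists>t. 0 < measure \<mu> (AA t) - measure \<mu> (sig -` AA t)) \<longleftrightarrow> measure \<mu> (sig -` DD) < measure \<mu> DD"
    by (rule core[OF fm sm key])
  have m1: "measure M {\<omega>\<in>space M. \<bar>U \<omega>\<bar> < V \<omega>} = measure \<mu> DD"
  proof -
    have "{\<omega>\<in>space M. \<bar>U \<omega>\<bar> < V \<omega>} = {\<omega>\<in>space M. (U \<omega>, V \<omega>) \<in> DD}" by (auto simp: DD_def)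
    then show ?thesis using conv[OF DD_borel] by simp
  qed
  have m2: "measure M {\<omega>\<in>space M. U \<omega> < - \<bar>V \<omega>\<bar>} = measure \<mu> (sig -` DD)"
  proof -
    have "{\<omega>\<in>space M. U \<omega> < - \<bar>V \<omega>\<bar>} = {\<omega>\<in>space M. (U \<omega>, V \<omega>) \<in> sig -` DD}" by (auto simp: DD_def sig_def)
    then show ?thesis using conv[OF sig_vimage_borel[OF DD_borel]] by simp
  qed
  show ?thesis
    unfolding st_le_def st_less_def c1 c2 c3 c4 m1 m2 strict[symmetric]
    using dd1 dd2 kA by (smt (verit))
qed

theorem proposition4p3:
  fixes M :: "'a measure" and X Y :: "'a \<Rightarrow> real" and f :: "real \<times> real \<Rightarrow> real"
  assumes "prob_space M"
    and "X \<in> borel_measurable M" and "Y \<in> borel_measurable M"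
    and "joint_pdf_or_pmf M X Y f"
  shows
   "(UR_lower f \<longrightarrow>
       st_le M (\<lambda>\<omega>. \<bar>X \<omega>\<bar>) (\<lambda>\<omega>. \<bar>max (X \<omega>) (Y \<omega>)\<bar>) \<and>
       st_le M (\<lambda>\<omega>. \<bar>min (X \<omega>) (Y \<omega>)\<bar>) (\<lambda>\<omega>. \<bar>Y \<omega>\<bar>) \<and>
       ((st_less M (\<lambda>\<omega>. \<bar>X \<omega>\<bar>) (\<lambda>\<omega>. \<bar>max (X \<omega>) (Y \<omega>)\<bar>) \<and>
         st_less M (\<lambda>\<omega>. \<bar>min (X \<omega>) (Y \<omega>)\<bar>) (\<lambda>\<omega>. \<bar>Y \<omega>\<bar>)) \<longleftrightarrow>
        measure M {\<omega>\<in>space M. \<bar>X \<omega>\<bar> < Y \<omega>} > measure M {\<omega>\<in>space M. X \<omega> < - \<bar>Y \<omega>\<bar>}))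
  \<and> (LR_lower f \<longrightarrow>
       st_le M (\<lambda>\<omega>. \<bar>Y \<omega>\<bar>) (\<lambda>\<omega>. \<bar>max (X \<omega>) (Y \<omega>)\<bar>) \<and>
       st_le M (\<lambda>\<omega>. \<bar>min (X \<omega>) (Y \<omega>)\<bar>) (\<lambda>\<omega>. \<bar>X \<omega>\<bar>) \<and>
       ((st_less M (\<lambda>\<omega>. \<bar>Y \<omega>\<bar>) (\<lambda>\<omega>. \<bar>max (X \<omega>) (Y \<omega>)\<bar>) \<and>
         st_less M (\<lambda>\<omega>. \<bar>min (X \<omega>) (Y \<omega>)\<bar>) (\<lambda>\<omega>. \<bar>X \<omega>\<bar>)) \<longleftrightarrow>
        measure M {\<omega>\<in>space M. \<bar>Y \<omega>\<bar> < X \<omega>} > measure M {\<omega>\<in>space M. Y \<omega> < - \<bar>X \<omega>\<bar>}))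
  \<and> (UR_upper f \<longrightarrow>
       st_le M (\<lambda>\<omega>. \<bar>max (X \<omega>) (Y \<omega>)\<bar>) (\<lambda>\<omega>. \<bar>X \<omega>\<bar>) \<and>
       st_le M (\<lambda>\<omega>. \<bar>Y \<omega>\<bar>) (\<lambda>\<omega>. \<bar>min (X \<omega>) (Y \<omega>)\<bar>) \<and>
       ((st_less M (\<lambda>\<omega>. \<bar>max (X \<omega>) (Y \<omega>)\<bar>) (\<lambda>\<omega>. \<bar>X \<omega>\<bar>) \<and>
         st_less M (\<lambda>\<omega>. \<bar>Y \<omega>\<bar>) (\<lambda>\<omega>. \<bar>min (X \<omega>) (Y \<omega>)\<bar>)) \<longleftrightarrow>
        measure M {\<omega>\<in>space M. \<bar>X \<omega>\<bar> < Y \<omega>} < measure M {\<omega>\<in>space M. X \<omega> < - \<bar>Y \<omega>\<bar>}))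
  \<and> (LR_upper f \<longrightarrow>
       st_le M (\<lambda>\<omega>. \<bar>max (X \<omega>) (Y \<omega>)\<bar>) (\<lambda>\<omega>. \<bar>Y \<omega>\<bar>) \<and>
       st_le M (\<lambda>\<omega>. \<bar>X \<omega>\<bar>) (\<lambda>\<omega>. \<bar>min (X \<omega>) (Y \<omega>)\<bar>) \<and>
       ((st_less M (\<lambda>\<omega>. \<bar>max (X \<omega>) (Y \<omega>)\<bar>) (\<lambda>\<omega>. \<bar>Y \<omega>\<bar>) \<and>
         st_less M (\<lambda>\<omega>. \<bar>X \<omega>\<bar>) (\<lambda>\<omega>. \<bar>min (X \<omega>) (Y \<omega>)\<bar>)) \<longleftrightarrow>
        measure M {\<omega>\<in>space M. \<bar>Y \<omega>\<bar> < X \<omega>} < measure M {\<omega>\<in>space M. Y \<omega> < - \<bar>X \<omega>\<bar>}))"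
proof -
  note P = assms(1) and XM = assms(2) and YM = assms(3) and J = assms(4)
  have mX: "(\<lambda>\<omega>. - X \<omega>) \<in> borel_measurable M" using XM by measurable
  have mY: "(\<lambda>\<omega>. - Y \<omega>) \<in> borel_measurable M" using YM by measurable
  have swapb: "prod.swap -` S \<in> sets borel" if "S \<in> sets borel" for S :: "(real\<times>real) set"
  proof -
    have "prod.swap \<in> borel_measurable (borel :: (real\<times>real) measure)"
      by (intro borel_measurable_continuous_onI continuous_intros)
    from measurable_sets[OF this that] show ?thesis by simp
  qed
  have r1: "st_le M (\<lambda>\<omega>. \<bar>X \<omega>\<bar>) (\<lambda>\<omega>. \<bar>max (X \<omega>) (Y \<omega>)\<bar>) \<and>
       st_le M (\<lambda>\<omega>. \<bar>min (X \<omega>) (Y \<omega>)\<bar>) (\<lambda>\<omega>. \<bar>Y \<omega>\<bar>) \<and>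
       ((st_less M (\<lambda>\<omega>. \<bar>X \<omega>\<bar>) (\<lambda>\<omega>. \<bar>max (X \<omega>) (Y \<omega>)\<bar>) \<and>
         st_less M (\<lambda>\<omega>. \<bar>min (X \<omega>) (Y \<omega>)\<bar>) (\<lambda>\<omega>. \<bar>Y \<omega>\<bar>)) \<longleftrightarrow>
        measure M {\<omega>\<in>space M. \<bar>X \<omega>\<bar> < Y \<omega>} > measure M {\<omega>\<in>space M. X \<omega> < - \<bar>Y \<omega>\<bar>})" if H: "UR_lower f"
  proof -
    have key: "measure M {\<omega>\<in>space M. sig (X \<omega>, Y \<omega>) \<in> S} \<le> measure M {\<omega>\<in>space M. (X \<omega>, Y \<omega>) \<in> S}"
      if S: "S \<in> sets borel" "S \<subseteq> DD" for S
    proof -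
      have c: "\<forall>z\<in>sig -` S. f z \<le> f (sig z)"
      proof
        fix z assume "z \<in> sig -` S"
        then have "sig z \<in> DD" using S by auto
        obtain a b where z: "z = (a, b)" by (cases z)
        with \<open>sig z \<in> DD\<close> have "\<bar>- b\<bar> < - a" by (simp add: DD_def sig_def)
        then have "f (- (- a), - (- b)) \<le> f (- b, - a)" using H unfolding UR_lower_def by blast
        then show "f z \<le> f (sig z)" by (simp add: z sig_def)
      qed
      have e1: "{\<omega>\<in>space M. (X \<omega>, Y \<omega>) \<in> sig -` S} = {\<omega>\<in>space M. sig (X \<omega>, Y \<omega>) \<in> S}" by auto
      have e2: "{\<omega>\<in>space M. sig (X \<omega>, Y \<omega>) \<in> sig -` S} = {\<omega>\<in>space M. (X \<omega>, Y \<omega>) \<in> S}" by auto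
      show ?thesis using G[OF P XM YM J sig_vimage_borel[OF S(1)] c] unfolding e1 e2 .
    qed
    show ?thesis by (rule main_pair[OF P XM YM key])
  qed
  have r2: "st_le M (\<lambda>\<omega>. \<bar>Y \<omega>\<bar>) (\<lambda>\<omega>. \<bar>max (X \<omega>) (Y \<omega>)\<bar>) \<and>
       st_le M (\<lambda>\<omega>. \<bar>min (X \<omega>) (Y \<omega>)\<bar>) (\<lambda>\<omega>. \<bar>X \<omega>\<bar>) \<and>
       ((st_less M (\<lambda>\<omega>. \<bar>Y \<omega>\<bar>) (\<lambda>\<omega>. \<bar>max (X \<omega>) (Y \<omega>)\<bar>) \<and>
         st_less M (\<lambda>\<omega>. \<bar>min (X \<omega>) (Y \<omega>)\<bar>) (\<lambda>\<omega>. \<bar>X \<omega>\<bar>)) \<longleftrightarrow>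
        measure M {\<omega>\<in>space M. \<bar>Y \<omega>\<bar> < X \<omega>} > measure M {\<omega>\<in>space M. Y \<omega> < - \<bar>X \<omega>\<bar>})" if H: "LR_lower f"
  proof -
    have key: "measure M {\<omega>\<in>space M. sig (Y \<omega>, X \<omega>) \<in> S} \<le> measure M {\<omega>\<in>space M. (Y \<omega>, X \<omega>) \<in> S}"
      if S: "S \<in> sets borel" "S \<subseteq> DD" for S
    proof -
      define T where "T = prod.swap -` S"
      have Tb: "sig -` T \<in> sets borel" unfolding T_def by (intro sig_vimage_borel swapb S)
      have c: "\<forall>z\<in>sig -` T. f z \<le> f (sig z)"
      proof
        fix z assume "z \<in> sig -` T"
        then have "prod.swap (sig z) \<in> DD" using S by (auto simp: T_def)
        obtain a b where z: "z = (a, b)" by (cases z)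
        with \<open>prod.swap (sig z) \<in> DD\<close> have "\<bar>- a\<bar> < - b" by (simp add: DD_def sig_def)
        then have "f (- (- a), - (- b)) \<le> f (- b, - a)" using H unfolding LR_lower_def by blast
        then show "f z \<le> f (sig z)" by (simp add: z sig_def)
      qed
      have e1: "{\<omega>\<in>space M. (X \<omega>, Y \<omega>) \<in> sig -` T} = {\<omega>\<in>space M. sig (Y \<omega>, X \<omega>) \<in> S}" by (auto simp: T_def sig_def)
      have e2: "{\<omega>\<in>space M. sig (X \<omega>, Y \<omega>) \<in> sig -` T} = {\<omega>\<in>space M. (Y \<omega>, X \<omega>) \<in> S}" by (auto simp: T_def)
      show ?thesis using G[OF P XM YM J Tb c] unfolding e1 e2 .
    qed
    have q1: "(\<lambda>\<omega>. \<bar>max (Y \<omega>) (X \<omega>)\<bar>) = (\<lambda>\<omega>. \<bar>max (X \<omega>) (Y \<omega>)\<bar>)" by (simp add: max.commute)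
    have q2: "(\<lambda>\<omega>. \<bar>min (Y \<omega>) (X \<omega>)\<bar>) = (\<lambda>\<omega>. \<bar>min (X \<omega>) (Y \<omega>)\<bar>)" by (simp add: min.commute)
    show ?thesis using main_pair[OF P YM XM key] unfolding q1 q2 .
  qed
  have r3: "st_le M (\<lambda>\<omega>. \<bar>max (X \<omega>) (Y \<omega>)\<bar>) (\<lambda>\<omega>. \<bar>X \<omega>\<bar>) \<and>
       st_le M (\<lambda>\<omega>. \<bar>Y \<omega>\<bar>) (\<lambda>\<omega>. \<bar>min (X \<omega>) (Y \<omega>)\<bar>) \<and>
       ((st_less M (\<lambda>\<omega>. \<bar>max (X \<omega>) (Y \<omega>)\<bar>) (\<lambda>\<omega>. \<bar>X \<omega>\<bar>) \<and>
         st_less M (\<lambda>\<omega>. \<bar>Y \<omega>\<bar>) (\<lambda>\<omega>. \<bar>min (X \<omega>) (Y \<omega>)\<bar>)) \<longleftrightarrow>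
        measure M {\<omega>\<in>space M. \<bar>X \<omega>\<bar> < Y \<omega>} < measure M {\<omega>\<in>space M. X \<omega> < - \<bar>Y \<omega>\<bar>})" if H: "UR_upper f"
  proof -
    have key: "measure M {\<omega>\<in>space M. sig (- Y \<omega>, - X \<omega>) \<in> S} \<le> measure M {\<omega>\<in>space M. (- Y \<omega>, - X \<omega>) \<in> S}"
      if S: "S \<in> sets borel" "S \<subseteq> DD" for S
    proof -
      have c: "\<forall>z\<in>S. f z \<le> f (sig z)"
      proof
        fix z assume "z \<in> S"
        then have "z \<in> DD" using S by auto
        then show "f z \<le> f (sig z)" using H unfolding UR_upper_def DD_def
          by (cases z) (auto simp: sig_def)
      qed
      have e1: "{\<omega>\<in>space M. (X \<omega>, Y \<omega>) \<in> S} = {\<omega>\<in>space M. sig (- Y \<omega>, - X \<omega>) \<in> S}" by (auto simp: sig_def)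
      have e2: "{\<omega>\<in>space M. sig (X \<omega>, Y \<omega>) \<in> S} = {\<omega>\<in>space M. (- Y \<omega>, - X \<omega>) \<in> S}" by (auto simp: sig_def)
      show ?thesis using G[OF P XM YM J S(1) c] unfolding e1 e2 .
    qed
    have q1: "(\<lambda>\<omega>. \<bar>max (- Y \<omega>) (- X \<omega>)\<bar>) = (\<lambda>\<omega>. \<bar>min (X \<omega>) (Y \<omega>)\<bar>)" by (auto simp: fun_eq_iff)
    have q2: "(\<lambda>\<omega>. \<bar>min (- Y \<omega>) (- X \<omega>)\<bar>) = (\<lambda>\<omega>. \<bar>max (X \<omega>) (Y \<omega>)\<bar>)" by (auto simp: fun_eq_iff)
    have q3: "(\<lambda>\<omega>. \<bar>- Y \<omega>\<bar>) = (\<lambda>\<omega>. \<bar>Y \<omega>\<bar>)" "(\<lambda>\<omega>. \<bar>- X \<omega>\<bar>) = (\<lambda>\<omega>. \<bar>X \<omega>\<bar>)" by auto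
    have q4: "{\<omega>\<in>space M. \<bar>- Y \<omega>\<bar> < - X \<omega>} = {\<omega>\<in>space M. X \<omega> < - \<bar>Y \<omega>\<bar>}" by auto
    have q5: "{\<omega>\<in>space M. - Y \<omega> < - \<bar>- X \<omega>\<bar>} = {\<omega>\<in>space M. \<bar>X \<omega>\<bar> < Y \<omega>}" by auto
    show ?thesis using main_pair[OF P mY mX key] unfolding q1 q2 q3 q4 q5 by blast
  qed
  have r4: "st_le M (\<lambda>\<omega>. \<bar>max (X \<omega>) (Y \<omega>)\<bar>) (\<lambda>\<omega>. \<bar>Y \<omega>\<bar>) \<and>
       st_le M (\<lambda>\<omega>. \<bar>X \<omega>\<bar>) (\<lambda>\<omega>. \<bar>min (X \<omega>) (Y \<omega>)\<bar>) \<and>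
       ((st_less M (\<lambda>\<omega>. \<bar>max (X \<omega>) (Y \<omega>)\<bar>) (\<lambda>\<omega>. \<bar>Y \<omega>\<bar>) \<and>
         st_less M (\<lambda>\<omega>. \<bar>X \<omega>\<bar>) (\<lambda>\<omega>. \<bar>min (X \<omega>) (Y \<omega>)\<bar>)) \<longleftrightarrow>
        measure M {\<omega>\<in>space M. \<bar>Y \<omega>\<bar> < X \<omega>} < measure M {\<omega>\<in>space M. Y \<omega> < - \<bar>X \<omega>\<bar>})" if H: "LR_upper f"
  proof -
    have key: "measure M {\<omega>\<in>space M. sig (- X \<omega>, - Y \<omega>) \<in> S} \<le> measure M {\<omega>\<in>space M. (- X \<omega>, - Y \<omega>) \<in> S}"
      if S: "S \<in> sets borel" "S \<subseteq> DD" for S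
    proof -
      define T where "T = prod.swap -` S"
      have Tb: "T \<in> sets borel" unfolding T_def by (intro swapb S)
      have c: "\<forall>z\<in>T. f z \<le> f (sig z)"
      proof
        fix z assume "z \<in> T"
        then have "prod.swap z \<in> DD" using S by (auto simp: T_def)
        then show "f z \<le> f (sig z)" using H unfolding LR_upper_def DD_def
          by (cases z) (auto simp: sig_def)
      qed
      have e1: "{\<omega>\<in>space M. (X \<omega>, Y \<omega>) \<in> T} = {\<omega>\<in>space M. sig (- X \<omega>, - Y \<omega>) \<in> S}" by (auto simp: T_def sig_def)
      have e2: "{\<omega>\<in>space M. sig (X \<omega>, Y \<omega>) \<in> T} = {\<omega>\<in>space M. (- X \<omega>, - Y \<omega>) \<in> S}" by (auto simp: T_def sig_def)
      show ?thesis using G[OF P XM YM J Tb c] unfolding e1 e2 .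
    qed
    have q1: "(\<lambda>\<omega>. \<bar>max (- X \<omega>) (- Y \<omega>)\<bar>) = (\<lambda>\<omega>. \<bar>min (X \<omega>) (Y \<omega>)\<bar>)" by (auto simp: fun_eq_iff)
    have q2: "(\<lambda>\<omega>. \<bar>min (- X \<omega>) (- Y \<omega>)\<bar>) = (\<lambda>\<omega>. \<bar>max (X \<omega>) (Y \<omega>)\<bar>)" by (auto simp: fun_eq_iff)
    have q3: "(\<lambda>\<omega>. \<bar>- Y \<omega>\<bar>) = (\<lambda>\<omega>. \<bar>Y \<omega>\<bar>)" "(\<lambda>\<omega>. \<bar>- X \<omega>\<bar>) = (\<lambda>\<omega>. \<bar>X \<omega>\<bar>)" by auto
    have q4: "{\<omega>\<in>space M. \<bar>- X \<omega>\<bar> < - Y \<omega>} = {\<omega>\<in>space M. Y \<omega> < - \<bar>X \<omega>\<bar>}" by auto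
    have q5: "{\<omega>\<in>space M. - X \<omega> < - \<bar>- Y \<omega>\<bar>} = {\<omega>\<in>space M. \<bar>Y \<omega>\<bar> < X \<omega>}" by auto
    show ?thesis using main_pair[OF P mX mY key] unfolding q1 q2 q3 q4 q5 by blast
  qed
  show ?thesis using r1 r2 r3 r4 by blast
qed

end
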